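(* Let $G$ be a simplicial group acting on a simplicial set $X$, let $g\in G_1$ be a loop, and let $\sigma\in X_n$. Then for any $0\le m\le n$ and $0\le k\le n+1$, \[ P^{n+1}_k\bigl(A^m_g(\sigma)\bigr)=\begin{cases}(-1)^k\,(1\otimes A^{m-k}_g)\,P^n_k(\sigma)&\text{if }k\le m,\\(A^m_g\otimes1)\,P^n_{k-1}(\sigma)&\text{if }k>m.\end{cases} \]
   Context: Chains are normalized. A loop is a $1$-simplex $g$ with $\partial_0g=\partial_1g=1_0$. For $I=\{i_1<\dots<i_r\}$ write $s_I=s_{i_r}\circ\dots\circ s_{i_1}$, and $[n]=\{0,\dots,n\}$. For a loop $g$ and $0\le m\le n$, $A^m_g\colon C_n(X)\to C_{n+1}(X)$ is $\sigma\mapsto(s_{[n]\setminus m}\,g)\cdot s_m\sigma$ (here $s_{[n]\setminus m}g$ means $s_I g$ for $I=[n]\setminus\{m\}$). For $0\le k\le n$, $P^n_k\colon C_n(X)\to C_k(X)\otimes C_{n-k}(X)$, $\sigma\mapsto\sigma(0,\dots,k)\otimes\sigma(k,\dots,n)$ (front and back faces); tensor products of maps follow the Koszul sign rule. *)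

theory Defs
  imports "HOL-Library.Poly_Mapping" "HOL-Algebra.Group"
begin

definition simplicial_set ::
  "(nat \<Rightarrow> 'x set) \<Rightarrow> (nat \<Rightarrow> 'x \<Rightarrow> 'x) \<Rightarrow> (nat \<Rightarrow> 'x \<Rightarrow> 'x) \<Rightarrow> bool" where
  "simplicial_set X d s \<longleftrightarrow>
     (\<forall>n i x. x \<in> X (Suc n) \<and> i \<le> Suc n \<longrightarrow> d i x \<in> X n) \<and>
     (\<forall>n i x. x \<in> X n \<and> i \<le> n \<longrightarrow> s i x \<in> X (Suc n)) \<and>
     (\<forall>n i j x. x \<in> X (Suc (Suc n)) \<and> i < j \<and> j \<le> Suc (Suc n) \<longrightarrow> d i (d j x) = d (j - 1) (d i x)) \<and>
     (\<forall>n i j x. x \<in> X n \<and> i \<le> j \<and> j \<le> n \<longrightarrow> s i (s j x) = s (Suc j) (s i x)) \<and>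
     (\<forall>n i j x. x \<in> X n \<and> i < j \<and> j \<le> n \<longrightarrow> d i (s j x) = s (j - 1) (d i x)) \<and>
     (\<forall>n j x. x \<in> X n \<and> j \<le> n \<longrightarrow> d j (s j x) = x \<and> d (Suc j) (s j x) = x) \<and>
     (\<forall>n i j x. x \<in> X n \<and> j \<le> n \<and> Suc j < i \<and> i \<le> Suc n \<longrightarrow> d i (s j x) = s j (d (i - 1) x))"

definition simplicial_group ::
  "(nat \<Rightarrow> 'g monoid) \<Rightarrow> (nat \<Rightarrow> 'g \<Rightarrow> 'g) \<Rightarrow> (nat \<Rightarrow> 'g \<Rightarrow> 'g) \<Rightarrow> bool" where
  "simplicial_group G dG sG \<longleftrightarrow>
     simplicial_set (\<lambda>n. carrier (G n)) dG sG \<and>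
     (\<forall>n. group (G n)) \<and>
     (\<forall>n i. i \<le> Suc n \<longrightarrow> dG i \<in> hom (G (Suc n)) (G n)) \<and>
     (\<forall>n i. i \<le> n \<longrightarrow> sG i \<in> hom (G n) (G (Suc n)))"

definition simplicial_action ::
  "(nat \<Rightarrow> 'g monoid) \<Rightarrow> (nat \<Rightarrow> 'g \<Rightarrow> 'g) \<Rightarrow> (nat \<Rightarrow> 'g \<Rightarrow> 'g) \<Rightarrow>
   (nat \<Rightarrow> 'x set) \<Rightarrow> (nat \<Rightarrow> 'x \<Rightarrow> 'x) \<Rightarrow> (nat \<Rightarrow> 'x \<Rightarrow> 'x) \<Rightarrow>
   ('g \<Rightarrow> 'x \<Rightarrow> 'x) \<Rightarrow> bool" where
  "simplicial_action G dG sG X d s act \<longleftrightarrow>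
     simplicial_group G dG sG \<and> simplicial_set X d s \<and>
     (\<forall>n g x. g \<in> carrier (G n) \<and> x \<in> X n \<longrightarrow> act g x \<in> X n) \<and>
     (\<forall>n x. x \<in> X n \<longrightarrow> act \<one>\<^bsub>G n\<^esub> x = x) \<and>
     (\<forall>n g h x. g \<in> carrier (G n) \<and> h \<in> carrier (G n) \<and> x \<in> X n \<longrightarrow>
        act (g \<otimes>\<^bsub>G n\<^esub> h) x = act g (act h x)) \<and>
     (\<forall>n i g x. g \<in> carrier (G (Suc n)) \<and> x \<in> X (Suc n) \<and> i \<le> Suc n \<longrightarrow>
        d i (act g x) = act (dG i g) (d i x)) \<and>
     (\<forall>n i g x. g \<in> carrier (G n) \<and> x \<in> X n \<and> i \<le> n \<longrightarrow>
        s i (act g x) = act (sG i g) (s i x))"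

definition is_loop :: "(nat \<Rightarrow> 'g monoid) \<Rightarrow> (nat \<Rightarrow> 'g \<Rightarrow> 'g) \<Rightarrow> 'g \<Rightarrow> bool" where
  "is_loop G dG g \<longleftrightarrow> g \<in> carrier (G 1) \<and> dG 0 g = \<one>\<^bsub>G 0\<^esub> \<and> dG 1 g = \<one>\<^bsub>G 0\<^esub>"

text \<open>s_I for I = {i_1 < ... < i_r} given as the increasing list [i_1,...,i_r]:
  s_I = s_{i_r} o ... o s_{i_1} (apply s_{i_1} first).\<close>

definition iter_degen :: "(nat \<Rightarrow> 'a \<Rightarrow> 'a) \<Rightarrow> nat list \<Rightarrow> 'a \<Rightarrow> 'a" where
  "iter_degen s is x = foldl (\<lambda>y i. s i y) x is"

definition all_but :: "nat \<Rightarrow> nat \<Rightarrow> nat list" where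
  "all_but n m = filter (\<lambda>i. i \<noteq> m) [0..<Suc n]"

text \<open>Front face sigma(0,...,k) of an n-simplex: d_{k+1} o ... o d_n (apply d_n first).\<close>

definition front_face :: "(nat \<Rightarrow> 'x \<Rightarrow> 'x) \<Rightarrow> nat \<Rightarrow> nat \<Rightarrow> 'x \<Rightarrow> 'x" where
  "front_face d n k x = foldl (\<lambda>y i. d i y) x (rev [Suc k..<Suc n])"

text \<open>Back face sigma(k,...,n): d_0 applied k times.\<close>

definition back_face :: "(nat \<Rightarrow> 'x \<Rightarrow> 'x) \<Rightarrow> nat \<Rightarrow> 'x \<Rightarrow> 'x" where
  "back_face d k x = (d 0 ^^ k) x"

text \<open>C_n(X) = Z[X_n] / (degenerate simplices), represented as the free abelian group
  on the nondegenerate n-simplices (finitely supported int-valued functions, 'x frag).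
  The class of an n-simplex sigma is frag_of sigma, or 0 if sigma is degenerate.\<close>

definition degenerate :: "(nat \<Rightarrow> 'x set) \<Rightarrow> (nat \<Rightarrow> 'x \<Rightarrow> 'x) \<Rightarrow> nat \<Rightarrow> 'x \<Rightarrow> bool" where
  "degenerate X s n x \<longleftrightarrow> (\<exists>m i y. n = Suc m \<and> i \<le> m \<and> y \<in> X m \<and> x = s i y)"

definition nchain :: "(nat \<Rightarrow> 'x set) \<Rightarrow> (nat \<Rightarrow> 'x \<Rightarrow> 'x) \<Rightarrow> nat \<Rightarrow> 'x \<Rightarrow> ('x \<Rightarrow>\<^sub>0 int)" where
  "nchain X s n x = (if degenerate X s n x then 0 else frag_of x)"

text \<open>Tensor product of chains: C_k \<otimes> C_l is free on pairs of nondegenerate simplices.\<close>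

definition tensor :: "('x \<Rightarrow>\<^sub>0 int) \<Rightarrow> ('y \<Rightarrow>\<^sub>0 int) \<Rightarrow> ('x \<times> 'y \<Rightarrow>\<^sub>0 int)" where
  "tensor a b = frag_extend (\<lambda>x. frag_extend (\<lambda>y. frag_of (x, y)) b) a"

text \<open>Tensor product of maps f \<otimes> h with the Koszul sign rule, applied to an element p of
  C_k \<otimes> C_l (k = degree of the first factor, dh = degree of h):
  (f \<otimes> h)(a \<otimes> b) = (-1)^(dh * k) f(a) \<otimes> h(b).\<close>

definition tensor_map ::
  "(('x \<Rightarrow>\<^sub>0 int) \<Rightarrow> ('x \<Rightarrow>\<^sub>0 int)) \<Rightarrow> (('x \<Rightarrow>\<^sub>0 int) \<Rightarrow> ('x \<Rightarrow>\<^sub>0 int)) \<Rightarrow> nat \<Rightarrow> nat \<Rightarrow>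
   ('x \<times> 'x \<Rightarrow>\<^sub>0 int) \<Rightarrow> ('x \<times> 'x \<Rightarrow>\<^sub>0 int)" where
  "tensor_map f h dh k p =
     frag_extend (\<lambda>(a, b). frag_cmul ((-1) ^ (dh * k)) (tensor (f (frag_of a)) (h (frag_of b)))) p"

text \<open>A^m_g : C_n(X) -> C_{n+1}(X), sigma |-> (s_{[n]\{m}} g) . s_m sigma, extended linearly.\<close>

definition A_op ::
  "(nat \<Rightarrow> 'x set) \<Rightarrow> (nat \<Rightarrow> 'x \<Rightarrow> 'x) \<Rightarrow> (nat \<Rightarrow> 'g \<Rightarrow> 'g) \<Rightarrow> ('g \<Rightarrow> 'x \<Rightarrow> 'x) \<Rightarrow>
   'g \<Rightarrow> nat \<Rightarrow> nat \<Rightarrow> ('x \<Rightarrow>\<^sub>0 int) \<Rightarrow> ('x \<Rightarrow>\<^sub>0 int)" where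
  "A_op X s sG act g n m c =
     frag_extend (\<lambda>x. nchain X s (Suc n) (act (iter_degen sG (all_but n m) g) (s m x))) c"

text \<open>P^n_k : C_n(X) -> C_k(X) \<otimes> C_{n-k}(X), sigma |-> sigma(0..k) \<otimes> sigma(k..n).\<close>

definition P_op ::
  "(nat \<Rightarrow> 'x set) \<Rightarrow> (nat \<Rightarrow> 'x \<Rightarrow> 'x) \<Rightarrow> (nat \<Rightarrow> 'x \<Rightarrow> 'x) \<Rightarrow> nat \<Rightarrow> nat \<Rightarrow>
   ('x \<Rightarrow>\<^sub>0 int) \<Rightarrow> ('x \<times> 'x \<Rightarrow>\<^sub>0 int)" where
  "P_op X d s n k c =
     frag_extend (\<lambda>x. tensor (nchain X s k (front_face d n k x))
                             (nchain X s (n - k) (back_face d k x))) c"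

end

theory Submission
  imports Defs
begin

locale sset =
  fixes X :: "nat \<Rightarrow> 'x set" and d s :: "nat \<Rightarrow> 'x \<Rightarrow> 'x"
  assumes ss: "simplicial_set X d s"
begin

lemma ssd: "(\<forall>n i x. x \<in> X (Suc n) \<and> i \<le> Suc n \<longrightarrow> d i x \<in> X n) \<and>
     (\<forall>n i x. x \<in> X n \<and> i \<le> n \<longrightarrow> s i x \<in> X (Suc n)) \<and>
     (\<forall>n i j x. x \<in> X (Suc (Suc n)) \<and> i < j \<and> j \<le> Suc (Suc n) \<longrightarrow> d i (d j x) = d (j - 1) (d i x)) \<and>
     (\<forall>n i j x. x \<in> X n \<and> i \<le> j \<and> j \<le> n \<longrightarrow> s i (s j x) = s (Suc j) (s i x)) \<and>
     (\<forall>n i j x. x \<in> X n \<and> i < j \<and> j \<le> n \<longrightarrow> d i (s j x) = s (j - 1) (d i x)) \<and>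
     (\<forall>n j x. x \<in> X n \<and> j \<le> n \<longrightarrow> d j (s j x) = x \<and> d (Suc j) (s j x) = x) \<and>
     (\<forall>n i j x. x \<in> X n \<and> j \<le> n \<and> Suc j < i \<and> i \<le> Suc n \<longrightarrow> d i (s j x) = s j (d (i - 1) x))"
  using ss unfolding simplicial_set_def .

lemma d_mem: "x \<in> X (Suc n) \<Longrightarrow> i \<le> Suc n \<Longrightarrow> d i x \<in> X n"
  using ssd[THEN conjunct1] by blast
lemma s_mem: "x \<in> X n \<Longrightarrow> i \<le> n \<Longrightarrow> s i x \<in> X (Suc n)"
  using ssd[THEN conjunct2, THEN conjunct1] by blast
lemma ss_rule: "x \<in> X n \<Longrightarrow> i \<le> j \<Longrightarrow> j \<le> n \<Longrightarrow> s i (s j x) = s (Suc j) (s i x)"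
  using ssd[THEN conjunct2, THEN conjunct2, THEN conjunct2, THEN conjunct1] by blast
lemma ds_lt: "x \<in> X n \<Longrightarrow> i < j \<Longrightarrow> j \<le> n \<Longrightarrow> d i (s j x) = s (j - 1) (d i x)"
  using ssd[THEN conjunct2, THEN conjunct2, THEN conjunct2, THEN conjunct2, THEN conjunct1] by blast
lemma ds_eq1: "x \<in> X n \<Longrightarrow> j \<le> n \<Longrightarrow> d j (s j x) = x"
  using ssd[THEN conjunct2, THEN conjunct2, THEN conjunct2, THEN conjunct2, THEN conjunct2, THEN conjunct1] by blast
lemma ds_eq2: "x \<in> X n \<Longrightarrow> j \<le> n \<Longrightarrow> d (Suc j) (s j x) = x"
  using ssd[THEN conjunct2, THEN conjunct2, THEN conjunct2, THEN conjunct2, THEN conjunct2, THEN conjunct1] by blast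
lemma ds_gt: "x \<in> X n \<Longrightarrow> j \<le> n \<Longrightarrow> Suc j < i \<Longrightarrow> i \<le> Suc n \<Longrightarrow> d i (s j x) = s j (d (i - 1) x)"
  using ssd[THEN conjunct2, THEN conjunct2, THEN conjunct2, THEN conjunct2, THEN conjunct2, THEN conjunct2] by blast

abbreviation "ff \<equiv> front_face d"
abbreviation "bf \<equiv> back_face d"

lemma ff_refl[simp]: "ff n n x = x"
  by (simp add: front_face_def)

lemma ff_Suc: "k \<le> n \<Longrightarrow> ff (Suc n) k x = ff n k (d (Suc n) x)"
proof -
  assume "k \<le> n"
  then have "[Suc k..<Suc (Suc n)] = [Suc k..<Suc n] @ [Suc n]" by simp
  then show ?thesis by (simp add: front_face_def)
qed

lemma ff_mem: "x \<in> X n \<Longrightarrow> k \<le> n \<Longrightarrow> ff n k x \<in> X k"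
proof (induction n arbitrary: x)
  case 0 then show ?case by simp
next
  case (Suc n)
  show ?case
  proof (cases "k = Suc n")
    case True then show ?thesis using Suc by simp
  next
    case False
    then have "k \<le> n" using Suc by simp
    then show ?thesis using Suc d_mem ff_Suc by simp
  qed
qed

lemma bf_Suc: "bf (Suc k) x = d 0 (bf k x)"
  by (simp add: back_face_def)
lemma bf_Suc2: "bf (Suc k) x = bf k (d 0 x)"
  by (simp add: back_face_def funpow_Suc_right del: funpow.simps)
lemma bf_0[simp]: "bf 0 x = x"
  by (simp add: back_face_def)

lemma bf_mem: "x \<in> X n \<Longrightarrow> k \<le> n \<Longrightarrow> bf k x \<in> X (n - k)"
proof (induction k)
  case 0 then show ?case by simp
next
  case (Suc k)
  have e: "n - k = Suc (n - Suc k)" using Suc.prems by simp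
  have "bf k x \<in> X (n - k)" using Suc.IH[OF Suc.prems(1)] Suc.prems(2) by simp
  then have "bf k x \<in> X (Suc (n - Suc k))" unfolding e .
  then show ?case using d_mem bf_Suc by simp
qed

lemma F1: "x \<in> X n \<Longrightarrow> k \<le> i \<Longrightarrow> i \<le> n \<Longrightarrow> ff (Suc n) k (s i x) = ff n k x"
proof (induction n arbitrary: x i)
  case 0 then show ?case using ff_Suc ds_eq2 by simp
next
  case (Suc n)
  have e: "ff (Suc (Suc n)) k (s i x) = ff (Suc n) k (d (Suc (Suc n)) (s i x))"
    using Suc ff_Suc by simp
  show ?case
  proof (cases "i = Suc n")
    case True then show ?thesis using e ds_eq2 Suc by simp
  next
    case False
    then have "d (Suc (Suc n)) (s i x) = s i (d (Suc n) x)" using Suc ds_gt by simp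
    moreover have "ff (Suc n) k (s i (d (Suc n) x)) = ff n k (d (Suc n) x)"
      using Suc False d_mem by simp
    ultimately show ?thesis using e ff_Suc Suc False by simp
  qed
qed

lemma F2: "x \<in> X n \<Longrightarrow> i < k \<Longrightarrow> k \<le> Suc n \<Longrightarrow> ff (Suc n) k (s i x) = s i (ff n (k - 1) x)"
proof (induction n arbitrary: x k)
  case 0 then have "k = Suc 0" by simp
  then show ?case by simp
next
  case (Suc n)
  show ?case
  proof (cases "k = Suc (Suc n)")
    case True then show ?thesis by simp
  next
    case False
    then have k: "k \<le> Suc n" using Suc by simp
    have "ff (Suc (Suc n)) k (s i x) = ff (Suc n) k (d (Suc (Suc n)) (s i x))"
      using k ff_Suc by simp
    also have "d (Suc (Suc n)) (s i x) = s i (d (Suc n) x)" using Suc k ds_gt by simp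
    also have "ff (Suc n) k (s i (d (Suc n) x)) = s i (ff n (k - 1) (d (Suc n) x))"
      using Suc k d_mem by simp
    also have "ff n (k - 1) (d (Suc n) x) = ff (Suc n) (k - 1) x"
      using ff_Suc[of "k - 1" n x] k Suc by simp
    finally show ?thesis .
  qed
qed

lemma B1: "x \<in> X n \<Longrightarrow> k \<le> i \<Longrightarrow> i \<le> n \<Longrightarrow> bf k (s i x) = s (i - k) (bf k x)"
proof (induction k)
  case 0 then show ?case by simp
next
  case (Suc k)
  have m: "bf k x \<in> X (n - k)" using Suc bf_mem by simp
  have "bf (Suc k) (s i x) = d 0 (s (i - k) (bf k x))" using Suc bf_Suc by simp
  also have "\<dots> = s (i - k - 1) (d 0 (bf k x))" using ds_lt[OF m, of 0 "i - k"] Suc by simp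
  also have "d 0 (bf k x) = bf (Suc k) x" using bf_Suc by simp
  also have "i - k - 1 = i - Suc k" by simp
  finally show ?case by simp
qed

lemma B2: "x \<in> X n \<Longrightarrow> i < k \<Longrightarrow> k \<le> Suc n \<Longrightarrow> bf k (s i x) = bf (k - 1) x"
proof (induction i arbitrary: x k n)
  case 0
  then obtain k' where k: "k = Suc k'" by (cases k) auto
  then show ?case using 0 bf_Suc2 ds_eq1 by simp
next
  case (Suc i)
  then obtain k' where k: "k = Suc k'" by (cases k) auto
  obtain n' where n: "n = Suc n'" using Suc by (cases n) auto
  have "bf k (s (Suc i) x) = bf k' (d 0 (s (Suc i) x))" using k bf_Suc2 by simp
  also have "d 0 (s (Suc i) x) = s i (d 0 x)" using ds_lt[of x n 0 "Suc i"] Suc n by simp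
  also have "bf k' (s i (d 0 x)) = bf (k' - 1) (d 0 x)" using Suc.IH[of "d 0 x" n' k'] Suc.prems k n d_mem[of x n' 0] by simp
  also have "\<dots> = bf k' x" using bf_Suc2[of "k' - 1" x] Suc k by simp
  finally show ?case using k by simp
qed

lemma degI: "y \<in> X m \<Longrightarrow> i \<le> m \<Longrightarrow> N = Suc m \<Longrightarrow> x = s i y \<Longrightarrow> degenerate X s N x"
  unfolding degenerate_def by blast

lemma L2: "x \<in> X n \<Longrightarrow> i \<le> n \<Longrightarrow> k \<le> Suc n \<Longrightarrow>
  degenerate X s k (ff (Suc n) k (s i x)) \<or> degenerate X s (Suc n - k) (bf k (s i x))"
proof (cases "k \<le> i")
  case True
  assume a: "x \<in> X n" "i \<le> n" "k \<le> Suc n"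
  have "degenerate X s (Suc n - k) (bf k (s i x))"
  proof (rule degI)
    show "bf k x \<in> X (n - k)" using bf_mem a True by simp
    show "bf k (s i x) = s (i - k) (bf k x)" using B1 a True by simp
  qed (use a True in auto)
  then show ?thesis ..
next
  case False
  assume a: "x \<in> X n" "i \<le> n" "k \<le> Suc n"
  have "degenerate X s k (ff (Suc n) k (s i x))"
  proof (rule degI)
    show "ff n (k - 1) x \<in> X (k - 1)" using ff_mem a False by simp
    show "ff (Suc n) k (s i x) = s i (ff n (k - 1) x)" using F2 a False by simp
  qed (use a False in auto)
  then show ?thesis ..
qed

lemma bf_add: "bf (a + b) x = bf a (bf b x)"
  by (simp add: back_face_def funpow_add)

end

locale sact =
  fixes G :: "nat \<Rightarrow> 'g monoid" and dG sG :: "nat \<Rightarrow> 'g \<Rightarrow> 'g"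
    and X :: "nat \<Rightarrow> 'x set" and d s :: "nat \<Rightarrow> 'x \<Rightarrow> 'x"
    and act :: "'g \<Rightarrow> 'x \<Rightarrow> 'x" and g :: 'g
  assumes A: "simplicial_action G dG sG X d s act"
    and L: "is_loop G dG g"
begin

lemma Ad: "simplicial_group G dG sG \<and> simplicial_set X d s \<and>
     (\<forall>n g x. g \<in> carrier (G n) \<and> x \<in> X n \<longrightarrow> act g x \<in> X n) \<and>
     (\<forall>n x. x \<in> X n \<longrightarrow> act \<one>\<^bsub>G n\<^esub> x = x) \<and>
     (\<forall>n g h x. g \<in> carrier (G n) \<and> h \<in> carrier (G n) \<and> x \<in> X n \<longrightarrow>
        act (g \<otimes>\<^bsub>G n\<^esub> h) x = act g (act h x)) \<and>
     (\<forall>n i g x. g \<in> carrier (G (Suc n)) \<and> x \<in> X (Suc n) \<and> i \<le> Suc n \<longrightarrow>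
        d i (act g x) = act (dG i g) (d i x)) \<and>
     (\<forall>n i g x. g \<in> carrier (G n) \<and> x \<in> X n \<and> i \<le> n \<longrightarrow>
        s i (act g x) = act (sG i g) (s i x))"
  using A unfolding simplicial_action_def .

lemma Gd: "simplicial_set (\<lambda>n. carrier (G n)) dG sG \<and>
     (\<forall>n. group (G n)) \<and>
     (\<forall>n i. i \<le> Suc n \<longrightarrow> dG i \<in> hom (G (Suc n)) (G n)) \<and>
     (\<forall>n i. i \<le> n \<longrightarrow> sG i \<in> hom (G n) (G (Suc n)))"
  using Ad[THEN conjunct1] unfolding simplicial_group_def .

sublocale SX: sset X d s
  unfolding sset_def by (rule Ad[THEN conjunct2, THEN conjunct1])
sublocale SG: sset "\<lambda>n. carrier (G n)" dG sG
  unfolding sset_def by (rule Gd[THEN conjunct1])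

lemma grp: "group (G n)"
  using Gd[THEN conjunct2, THEN conjunct1] by blast
lemma one_in: "\<one>\<^bsub>G n\<^esub> \<in> carrier (G n)"
  using grp group.is_monoid monoid.one_closed by blast
lemma dG_one: "i \<le> Suc n \<Longrightarrow> dG i \<one>\<^bsub>G (Suc n)\<^esub> = \<one>\<^bsub>G n\<^esub>"
proof -
  assume "i \<le> Suc n"
  then have "dG i \<in> hom (G (Suc n)) (G n)" using Gd[THEN conjunct2, THEN conjunct2, THEN conjunct1] by blast
  then show ?thesis using hom_one grp by blast
qed
lemma sG_one: "i \<le> n \<Longrightarrow> sG i \<one>\<^bsub>G n\<^esub> = \<one>\<^bsub>G (Suc n)\<^esub>"
proof -
  assume "i \<le> n"
  then have "sG i \<in> hom (G n) (G (Suc n))" using Gd[THEN conjunct2, THEN conjunct2, THEN conjunct2] by blast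
  then show ?thesis using hom_one grp by blast
qed
lemma act_mem: "a \<in> carrier (G n) \<Longrightarrow> x \<in> X n \<Longrightarrow> act a x \<in> X n"
  using Ad[THEN conjunct2, THEN conjunct2, THEN conjunct1] by blast
lemma act_one: "x \<in> X n \<Longrightarrow> act \<one>\<^bsub>G n\<^esub> x = x"
  using Ad[THEN conjunct2, THEN conjunct2, THEN conjunct2, THEN conjunct1] by blast
lemma act_d: "a \<in> carrier (G (Suc n)) \<Longrightarrow> x \<in> X (Suc n) \<Longrightarrow> i \<le> Suc n \<Longrightarrow>
    d i (act a x) = act (dG i a) (d i x)"
  using Ad[THEN conjunct2, THEN conjunct2, THEN conjunct2, THEN conjunct2, THEN conjunct2, THEN conjunct1] by blast
lemma act_s: "a \<in> carrier (G n) \<Longrightarrow> x \<in> X n \<Longrightarrow> i \<le> n \<Longrightarrow>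
    s i (act a x) = act (sG i a) (s i x)"
  using Ad[THEN conjunct2, THEN conjunct2, THEN conjunct2, THEN conjunct2, THEN conjunct2, THEN conjunct2] by blast
lemma g_mem: "g \<in> carrier (G 1)" and g_d0: "dG 0 g = \<one>\<^bsub>G 0\<^esub>" and g_d1: "dG 1 g = \<one>\<^bsub>G 0\<^esub>"
  using L unfolding is_loop_def by auto

lemma ffG_one: "k \<le> n \<Longrightarrow> SG.ff n k \<one>\<^bsub>G n\<^esub> = \<one>\<^bsub>G k\<^esub>"
proof (induction n)
  case 0 then show ?case by simp
next
  case (Suc n)
  show ?case
  proof (cases "k = Suc n")
    case True then show ?thesis by simp
  next
    case False
    then have "k \<le> n" using Suc by simp
    then show ?thesis using Suc SG.ff_Suc dG_one by simp
  qed
qed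

lemma bfG_one: "k \<le> n \<Longrightarrow> SG.bf k \<one>\<^bsub>G n\<^esub> = \<one>\<^bsub>G (n - k)\<^esub>"
proof (induction k)
  case 0 then show ?case by simp
next
  case (Suc k)
  have e: "n - k = Suc (n - Suc k)" using Suc by simp
  have "SG.bf (Suc k) \<one>\<^bsub>G n\<^esub> = dG 0 \<one>\<^bsub>G (n - k)\<^esub>" using Suc SG.bf_Suc by simp
  also have "\<dots> = \<one>\<^bsub>G (n - Suc k)\<^esub>" unfolding e by (rule dG_one) simp
  finally show ?case .
qed

lemma ff_act: "a \<in> carrier (G n) \<Longrightarrow> x \<in> X n \<Longrightarrow> k \<le> n \<Longrightarrow>
    SX.ff n k (act a x) = act (SG.ff n k a) (SX.ff n k x)"
proof (induction n arbitrary: a x)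
  case 0 then show ?case by simp
next
  case (Suc n)
  show ?case
  proof (cases "k = Suc n")
    case True then show ?thesis by simp
  next
    case False
    then have k: "k \<le> n" using Suc by simp
    have "SX.ff (Suc n) k (act a x) = SX.ff n k (d (Suc n) (act a x))" using k SX.ff_Suc by simp
    also have "d (Suc n) (act a x) = act (dG (Suc n) a) (d (Suc n) x)" using Suc act_d by simp
    also have "SX.ff n k (act (dG (Suc n) a) (d (Suc n) x)) =
        act (SG.ff n k (dG (Suc n) a)) (SX.ff n k (d (Suc n) x))"
      using Suc k SX.d_mem SG.d_mem by simp
    finally show ?thesis using k SX.ff_Suc SG.ff_Suc by simp
  qed
qed

lemma bf_act: "a \<in> carrier (G n) \<Longrightarrow> x \<in> X n \<Longrightarrow> k \<le> n \<Longrightarrow>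
    SX.bf k (act a x) = act (SG.bf k a) (SX.bf k x)"
proof (induction k)
  case 0 then show ?case by simp
next
  case (Suc k)
  have e: "n - k = Suc (n - Suc k)" using Suc by simp
  have m1: "SG.bf k a \<in> carrier (G (Suc (n - Suc k)))" using SG.bf_mem[of a n k] Suc.prems e by simp
  have m2: "SX.bf k x \<in> X (Suc (n - Suc k))" using SX.bf_mem[of x n k] Suc.prems e by simp
  have "SX.bf (Suc k) (act a x) = d 0 (act (SG.bf k a) (SX.bf k x))" using Suc SX.bf_Suc by simp
  also have "\<dots> = act (dG 0 (SG.bf k a)) (d 0 (SX.bf k x))" using act_d[OF m1 m2] by simp
  finally show ?case using SX.bf_Suc SG.bf_Suc by simp
qed

abbreviation hh :: "nat \<Rightarrow> nat \<Rightarrow> 'g" where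
  "hh n m \<equiv> iter_degen sG (all_but n m) g"

lemma hh_00: "hh 0 0 = g"
  by (simp add: all_but_def iter_degen_def)

lemma hh_rec1: "m \<le> n \<Longrightarrow> hh (Suc n) m = sG (Suc n) (hh n m)"
proof -
  assume "m \<le> n"
  then have "all_but (Suc n) m = all_but n m @ [Suc n]" by (simp add: all_but_def)
  then show ?thesis by (simp add: iter_degen_def)
qed

lemma all_but_nn: "all_but n n = [0..<n]"
  by (simp add: all_but_def filter_id_conv)

lemma hh_rec2: "hh (Suc n) (Suc n) = sG n (hh n n)"
  by (simp add: all_but_nn iter_degen_def)

lemma hh_mem: "m \<le> n \<Longrightarrow> hh n m \<in> carrier (G (Suc n))"
proof (induction n arbitrary: m)
  case 0 then show ?case using hh_00 g_mem by simp
next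
  case (Suc n)
  show ?case
  proof (cases "m = Suc n")
    case True then show ?thesis using hh_rec2 Suc.IH[of n] SG.s_mem by simp
  next
    case False then show ?thesis using hh_rec1 Suc SG.s_mem by simp
  qed
qed

lemma H1: "k \<le> m \<Longrightarrow> m \<le> n \<Longrightarrow> SG.ff (Suc n) k (hh n m) = \<one>\<^bsub>G k\<^esub>"
proof (induction n arbitrary: m k)
  case 0 then show ?case using hh_00 g_d1 SG.ff_Suc[of 0 0 g] by simp
next
  case (Suc n)
  show ?case
  proof (cases "m = Suc n")
    case True
    have hm: "hh n n \<in> carrier (G (Suc n))" using hh_mem by simp
    show ?thesis
    proof (cases "k \<le> n")
      case True
      then show ?thesis using \<open>m = Suc n\<close> hh_rec2 SG.F1[OF hm, of k n] Suc.IH[of k n] by simp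
    next
      case False
      then have k: "k = Suc n" using Suc \<open>m = Suc n\<close> by simp
      then show ?thesis using \<open>m = Suc n\<close> hh_rec2 SG.F2[OF hm, of n k] Suc.IH[of n n] sG_one
        by simp
    qed
  next
    case False
    then have m: "m \<le> n" using Suc by simp
    then have hm: "hh n m \<in> carrier (G (Suc n))" using hh_mem by simp
    show ?thesis using m hh_rec1 SG.F1[OF hm, of k "Suc n"] Suc by simp
  qed
qed

lemma H2a: "0 < m \<Longrightarrow> m \<le> n \<Longrightarrow> dG 0 (hh n m) = hh (n - 1) (m - 1)"
proof (induction n arbitrary: m)
  case 0 then show ?case by simp
next
  case (Suc n)
  show ?case
  proof (cases "m = Suc n")
    case True
    have hm: "hh n n \<in> carrier (G (Suc n))" using hh_mem by simp
    show ?thesis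
    proof (cases "n = 0")
      case True
      then show ?thesis using \<open>m = Suc n\<close> hh_rec2 hh_00 SG.ds_eq1[of g 1 0] g_mem by simp
    next
      case False
      then obtain n' where n: "n = Suc n'" by (cases n) auto
      have "dG 0 (hh (Suc n) m) = dG 0 (sG n (hh n n))" using True hh_rec2 by simp
      also have "\<dots> = sG n' (dG 0 (hh n n))" using SG.ds_lt[OF hm, of 0 n] n by simp
      also have "dG 0 (hh n n) = hh n' n'" using Suc.IH[of n] n by simp
      finally show ?thesis using True n hh_rec2 by simp
    qed
  next
    case False
    then have m: "m \<le> n" using Suc by simp
    then have hm: "hh n m \<in> carrier (G (Suc n))" using hh_mem by simp
    obtain n' where n: "n = Suc n'" using m Suc by (cases n) auto
    have "dG 0 (hh (Suc n) m) = dG 0 (sG (Suc n) (hh n m))" using m hh_rec1 by simp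
    also have "\<dots> = sG n (dG 0 (hh n m))" using SG.ds_lt[OF hm, of 0 "Suc n"] by simp
    also have "dG 0 (hh n m) = hh n' (m - 1)" using Suc.IH[of m] Suc m n by simp
    finally show ?thesis using hh_rec1[of "m - 1" n'] n m Suc by simp
  qed
qed

lemma H2: "k \<le> m \<Longrightarrow> m \<le> n \<Longrightarrow> SG.bf k (hh n m) = hh (n - k) (m - k)"
proof (induction k)
  case 0 then show ?case by simp
next
  case (Suc k)
  then have "SG.bf (Suc k) (hh n m) = dG 0 (hh (n - k) (m - k))" using SG.bf_Suc by simp
  also have "\<dots> = hh (n - k - 1) (m - k - 1)" using H2a[of "m - k" "n - k"] Suc by simp
  finally show ?case by (simp add: diff_diff_add)
qed

lemma H3: "m < k \<Longrightarrow> k \<le> Suc n \<Longrightarrow> SG.ff (Suc n) k (hh n m) = hh (k - 1) m"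
proof (induction n arbitrary: k)
  case 0 then have "k = 1" "m = 0" by auto
  then show ?case by simp
next
  case (Suc n)
  show ?case
  proof (cases "k = Suc (Suc n)")
    case True then show ?thesis by simp
  next
    case False
    then have k: "k \<le> Suc n" using Suc by simp
    then have m: "m \<le> n" using Suc by simp
    then have hm: "hh n m \<in> carrier (G (Suc n))" using hh_mem by simp
    show ?thesis using m k hh_rec1 SG.F1[OF hm, of k "Suc n"] Suc by simp
  qed
qed

lemma H4a: "dG 0 (hh n 0) = \<one>\<^bsub>G n\<^esub>"
proof (induction n)
  case 0 then show ?case using hh_00 g_d0 by simp
next
  case (Suc n)
  have hm: "hh n 0 \<in> carrier (G (Suc n))" using hh_mem by simp
  have "dG 0 (hh (Suc n) 0) = dG 0 (sG (Suc n) (hh n 0))" using hh_rec1 by simp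
  also have "\<dots> = sG n (dG 0 (hh n 0))" using SG.ds_lt[OF hm, of 0 "Suc n"] by simp
  finally show ?case using Suc sG_one by simp
qed

lemma H4: "m < k \<Longrightarrow> k \<le> Suc n \<Longrightarrow> SG.bf k (hh n m) = \<one>\<^bsub>G (Suc n - k)\<^esub>"
proof -
  assume a: "m < k" "k \<le> Suc n"
  define j where "j = k - Suc m"
  have k: "k = j + Suc m" using a j_def by simp
  have "SG.bf k (hh n m) = SG.bf j (dG 0 (SG.bf m (hh n m)))"
    unfolding k SG.bf_add SG.bf_Suc ..
  also have "SG.bf m (hh n m) = hh (n - m) 0" using H2[of m m n] a by simp
  also have "dG 0 (hh (n - m) 0) = \<one>\<^bsub>G (n - m)\<^esub>" by (rule H4a)
  also have "SG.bf j \<one>\<^bsub>G (n - m)\<^esub> = \<one>\<^bsub>G (n - m - j)\<^esub>" using bfG_one a k by simp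
  finally show ?thesis using k by (simp add: diff_diff_add add.commute)
qed

lemma H5: "j \<le> n \<Longrightarrow> j \<noteq> m \<Longrightarrow> m \<le> n \<Longrightarrow> \<exists>y \<in> carrier (G n). hh n m = sG j y"
proof (induction n arbitrary: m j)
  case 0 then show ?case by simp
next
  case (Suc n)
  show ?case
  proof (cases "m = Suc n")
    case True
    have hm: "hh n n \<in> carrier (G (Suc n))" using hh_mem by simp
    show ?thesis
    proof (cases "j = n")
      case True then show ?thesis using \<open>m = Suc n\<close> hh_rec2 hm by auto
    next
      case False
      then have j: "j < n" using Suc \<open>m = Suc n\<close> by simp
      then obtain n' where n: "n = Suc n'" by (cases n) auto
      obtain y where y: "y \<in> carrier (G n)" "hh n n = sG j y" using Suc.IH[of j n] j by auto
      have "sG j (sG n' y) = sG n (sG j y)" using SG.ss_rule[of y n j n'] y n j by simp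
      moreover have "sG n' y \<in> carrier (G (Suc n))" using SG.s_mem y n by simp
      moreover have "hh (Suc n) m = sG n (sG j y)" using \<open>m = Suc n\<close> hh_rec2 y(2) by simp
      ultimately show ?thesis by force
    qed
  next
    case False
    then have m: "m \<le> n" using Suc by simp
    have hm: "hh n m \<in> carrier (G (Suc n))" using hh_mem m by simp
    show ?thesis
    proof (cases "j = Suc n")
      case True then show ?thesis using m hh_rec1 hm by auto
    next
      case False
      then have j: "j \<le> n" using Suc by simp
      obtain y where y: "y \<in> carrier (G n)" "hh n m = sG j y" using Suc.IH[of j m] j m Suc by auto
      have "sG j (sG n y) = sG (Suc n) (sG j y)" using SG.ss_rule[of y n j n] y j by simp
      moreover have "sG n y \<in> carrier (G (Suc n))" using SG.s_mem y by simp
      moreover have "hh (Suc n) m = sG (Suc n) (sG j y)" using m hh_rec1 y(2) by simp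
      ultimately show ?thesis by force
    qed
  qed
qed

lemma L1: "degenerate X s N x \<Longrightarrow> m \<le> N \<Longrightarrow> degenerate X s (Suc N) (act (hh N m) (s m x))"
proof -
  assume dg: "degenerate X s N x" and mN: "m \<le> N"
  then obtain n' i y where N: "N = Suc n'" and i: "i \<le> n'" and y: "y \<in> X n'" and x: "x = s i y"
    unfolding degenerate_def by blast
  show ?thesis
  proof (cases "i < m")
    case True
    have e: "s m (s i y) = s i (s (m - 1) y)" using SX.ss_rule[OF y, of i "m - 1"] True mN N by simp
    obtain a where a: "a \<in> carrier (G N)" "hh N m = sG i a" using H5[of i N m] True mN N i by auto
    have z: "s (m - 1) y \<in> X N" using SX.s_mem[OF y] True mN N by simp
    have eq: "act (hh N m) (s m x) = s i (act a (s (m - 1) y))"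
      using act_s[OF a(1) z, of i] a x e N i by simp
    have iN: "i \<le> N" using N i by simp
    show ?thesis by (rule SX.degI[OF act_mem[OF a(1) z] iN refl eq])
  next
    case False
    have e: "s m (s i y) = s (Suc i) (s m y)" using SX.ss_rule[OF y, of m i] False i by simp
    obtain a where a: "a \<in> carrier (G N)" "hh N m = sG (Suc i) a" using H5[of "Suc i" N m] False mN N i by auto
    have z: "s m y \<in> X N" using SX.s_mem[OF y] False i N by simp
    have eq: "act (hh N m) (s m x) = s (Suc i) (act a (s m y))"
      using act_s[OF a(1) z, of "Suc i"] a x e N i by simp
    have iN: "Suc i \<le> N" using N i by simp
    show ?thesis by (rule SX.degI[OF act_mem[OF a(1) z] iN refl eq])
  qed
qed

lemma T1: "\<sigma> \<in> X n \<Longrightarrow> k \<le> m \<Longrightarrow> m \<le> n \<Longrightarrow>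
   SX.ff (Suc n) k (act (hh n m) (s m \<sigma>)) = SX.ff n k \<sigma>"
proof -
  assume a: "\<sigma> \<in> X n" "k \<le> m" "m \<le> n"
  have hm: "hh n m \<in> carrier (G (Suc n))" using hh_mem[of m n] a(3) .
  have sm: "s m \<sigma> \<in> X (Suc n)" using a by (intro SX.s_mem) auto
  have k: "k \<le> Suc n" using a by linarith
  have 1: "SX.ff (Suc n) k (act (hh n m) (s m \<sigma>)) = act (SG.ff (Suc n) k (hh n m)) (SX.ff (Suc n) k (s m \<sigma>))"
    by (rule ff_act[OF hm sm k])
  have 2: "SG.ff (Suc n) k (hh n m) = \<one>\<^bsub>G k\<^esub>" by (rule H1[OF a(2) a(3)])
  have 3: "SX.ff (Suc n) k (s m \<sigma>) = SX.ff n k \<sigma>" by (rule SX.F1[OF a(1) a(2) a(3)])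
  have 4: "act \<one>\<^bsub>G k\<^esub> (SX.ff n k \<sigma>) = SX.ff n k \<sigma>"
    using act_one[OF SX.ff_mem[of \<sigma> n k]] a by linarith
  show ?thesis unfolding 1 2 3 4 ..
qed

lemma T2: "\<sigma> \<in> X n \<Longrightarrow> k \<le> m \<Longrightarrow> m \<le> n \<Longrightarrow>
   SX.bf k (act (hh n m) (s m \<sigma>)) = act (hh (n - k) (m - k)) (s (m - k) (SX.bf k \<sigma>))"
proof -
  assume a: "\<sigma> \<in> X n" "k \<le> m" "m \<le> n"
  have hm: "hh n m \<in> carrier (G (Suc n))" using hh_mem[of m n] a(3) .
  have sm: "s m \<sigma> \<in> X (Suc n)" using a by (intro SX.s_mem) auto
  have k: "k \<le> Suc n" using a by linarith
  have 1: "SX.bf k (act (hh n m) (s m \<sigma>)) = act (SG.bf k (hh n m)) (SX.bf k (s m \<sigma>))"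
    by (rule bf_act[OF hm sm k])
  have 2: "SG.bf k (hh n m) = hh (n - k) (m - k)" by (rule H2[OF a(2) a(3)])
  have 3: "SX.bf k (s m \<sigma>) = s (m - k) (SX.bf k \<sigma>)" by (rule SX.B1[OF a(1) a(2) a(3)])
  show ?thesis unfolding 1 2 3 ..
qed

lemma T3: "\<sigma> \<in> X n \<Longrightarrow> m < k \<Longrightarrow> k \<le> Suc n \<Longrightarrow> m \<le> n \<Longrightarrow>
   SX.ff (Suc n) k (act (hh n m) (s m \<sigma>)) = act (hh (k - 1) m) (s m (SX.ff n (k - 1) \<sigma>))"
proof -
  assume a: "\<sigma> \<in> X n" "m < k" "k \<le> Suc n" "m \<le> n"
  have hm: "hh n m \<in> carrier (G (Suc n))" using hh_mem[of m n] a(4) .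
  have sm: "s m \<sigma> \<in> X (Suc n)" using a by (intro SX.s_mem) auto
  have 1: "SX.ff (Suc n) k (act (hh n m) (s m \<sigma>)) = act (SG.ff (Suc n) k (hh n m)) (SX.ff (Suc n) k (s m \<sigma>))"
    by (rule ff_act[OF hm sm a(3)])
  have 2: "SG.ff (Suc n) k (hh n m) = hh (k - 1) m" by (rule H3[OF a(2) a(3)])
  have 3: "SX.ff (Suc n) k (s m \<sigma>) = s m (SX.ff n (k - 1) \<sigma>)" by (rule SX.F2[OF a(1) a(2) a(3)])
  show ?thesis unfolding 1 2 3 ..
qed

lemma T4: "\<sigma> \<in> X n \<Longrightarrow> m < k \<Longrightarrow> k \<le> Suc n \<Longrightarrow> m \<le> n \<Longrightarrow>
   SX.bf k (act (hh n m) (s m \<sigma>)) = SX.bf (k - 1) \<sigma>"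
proof -
  assume a: "\<sigma> \<in> X n" "m < k" "k \<le> Suc n" "m \<le> n"
  have hm: "hh n m \<in> carrier (G (Suc n))" using hh_mem[of m n] a(4) .
  have sm: "s m \<sigma> \<in> X (Suc n)" using a by (intro SX.s_mem) auto
  have 1: "SX.bf k (act (hh n m) (s m \<sigma>)) = act (SG.bf k (hh n m)) (SX.bf k (s m \<sigma>))"
    by (rule bf_act[OF hm sm a(3)])
  have 2: "SG.bf k (hh n m) = \<one>\<^bsub>G (Suc n - k)\<^esub>" by (rule H4[OF a(2) a(3)])
  have 3: "SX.bf k (s m \<sigma>) = SX.bf (k - 1) \<sigma>" by (rule SX.B2[OF a(1) a(2) a(3)])
  have e: "Suc n - k = n - (k - 1)" using a by linarith
  have 4: "act \<one>\<^bsub>G (Suc n - k)\<^esub> (SX.bf (k - 1) \<sigma>) = SX.bf (k - 1) \<sigma>"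
    unfolding e using act_one[OF SX.bf_mem[of \<sigma> n "k - 1"]] a by linarith
  show ?thesis unfolding 1 2 3 4 ..
qed

end

lemma tensor_0_left[simp]: "tensor 0 b = 0"
  by (simp add: tensor_def)
lemma tensor_0_right[simp]: "tensor a 0 = 0"
  by (simp add: tensor_def frag_extend_eq_0)
lemma tensor_of[simp]: "tensor (frag_of a) (frag_of b) = frag_of (a, b)"
  by (simp add: tensor_def)
lemma tensor_map_0[simp]: "tensor_map f h dh k 0 = 0"
  by (simp add: tensor_map_def)
lemma P_op_0[simp]: "P_op X d s N k 0 = 0"
  by (simp add: P_op_def)

lemma TM: "tensor_map f h dh k (tensor (nchain X s p a) (nchain X s q b)) =
  (if degenerate X s p a \<or> degenerate X s q b then 0
   else frag_cmul ((-1) ^ (dh * k)) (tensor (f (frag_of a)) (h (frag_of b))))"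
  by (simp add: tensor_map_def nchain_def)

lemma P_nc: "P_op X d s N k (nchain X s N x) = (if degenerate X s N x then 0 else
   tensor (nchain X s k (front_face d N k x)) (nchain X s (N - k) (back_face d k x)))"
  by (simp add: P_op_def nchain_def)

lemma A_nc: "A_op X s sG act g n m (nchain X s n x) = (if degenerate X s n x then 0 else
   nchain X s (Suc n) (act (iter_degen sG (all_but n m) g) (s m x)))"
  by (simp add: A_op_def nchain_def)

lemma A_of: "A_op X s sG act g n m (frag_of x) = nchain X s (Suc n) (act (iter_degen sG (all_but n m) g) (s m x))"
  by (simp add: A_op_def)

lemma sign_sq: "((-1::int) ^ k) * (-1) ^ (1 * k) = 1"
  by (simp add: power_mult_distrib[symmetric])

context sact begin

lemma lhs_eq: "\<tau> \<in> X (Suc n) \<Longrightarrow> k \<le> Suc n \<Longrightarrow>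
  P_op X d s (Suc n) k (nchain X s (Suc n) \<tau>) =
  tensor (nchain X s k (SX.ff (Suc n) k \<tau>)) (nchain X s (Suc n - k) (SX.bf k \<tau>))"
proof (cases "degenerate X s (Suc n) \<tau>")
  case True
  assume a: "\<tau> \<in> X (Suc n)" "k \<le> Suc n"
  then obtain i y where "i \<le> n" "y \<in> X n" "\<tau> = s i y" using True unfolding degenerate_def by auto
  then have "degenerate X s k (SX.ff (Suc n) k \<tau>) \<or> degenerate X s (Suc n - k) (SX.bf k \<tau>)"
    using SX.L2 a by simp
  then show ?thesis using True by (auto simp: P_nc nchain_def)
next
  case False then show ?thesis by (simp add: P_nc)
qed

lemma main:
  assumes "\<sigma> \<in> X n" and "m \<le> n" and "k \<le> Suc n"
  shows "P_op X d s (Suc n) k (A_op X s sG act g n m (nchain X s n \<sigma>)) =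
    (if k \<le> m then
       frag_cmul ((-1) ^ k)
         (tensor_map id (A_op X s sG act g (n - k) (m - k)) 1 k (P_op X d s n k (nchain X s n \<sigma>)))
     else
       tensor_map (A_op X s sG act g (k - 1) m) id 0 (k - 1) (P_op X d s n (k - 1) (nchain X s n \<sigma>)))"
proof (cases "degenerate X s n \<sigma>")
  case True then show ?thesis by (simp add: A_nc P_nc)
next
  case nd: False
  define \<tau> where "\<tau> = act (hh n m) (s m \<sigma>)"
  have \<tau>m: "\<tau> \<in> X (Suc n)" unfolding \<tau>_def using act_mem hh_mem SX.s_mem assms by simp
  have L: "P_op X d s (Suc n) k (A_op X s sG act g n m (nchain X s n \<sigma>)) =
     tensor (nchain X s k (SX.ff (Suc n) k \<tau>)) (nchain X s (Suc n - k) (SX.bf k \<tau>))"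
    using nd lhs_eq[OF \<tau>m assms(3)] by (simp add: A_nc \<tau>_def)
  show ?thesis
  proof (cases "k \<le> m")
    case True
    define a where "a = SX.ff n k \<sigma>"
    define b where "b = SX.bf k \<sigma>"
    have ff: "SX.ff (Suc n) k \<tau> = a" unfolding a_def \<tau>_def using T1 assms True by simp
    have bf: "SX.bf k \<tau> = act (hh (n - k) (m - k)) (s (m - k) b)" unfolding b_def \<tau>_def using T2 assms True by simp
    have e: "Suc n - k = Suc (n - k)" using True assms by simp
    have R: "frag_cmul ((-1) ^ k)
         (tensor_map id (A_op X s sG act g (n - k) (m - k)) 1 k (P_op X d s n k (nchain X s n \<sigma>))) =
       (if degenerate X s k a \<or> degenerate X s (n - k) b then 0
        else tensor (frag_of a) (nchain X s (Suc n - k) (SX.bf k \<tau>)))"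
      using nd by (simp add: P_nc TM A_of a_def b_def bf e sign_sq)
    show ?thesis
    proof (cases "degenerate X s (n - k) b")
      case True
      then have "degenerate X s (Suc (n - k)) (act (hh (n - k) (m - k)) (s (m - k) b))"
        using L1 assms \<open>k \<le> m\<close> by simp
      then show ?thesis using L R True \<open>k \<le> m\<close> by (simp add: bf e nchain_def)
    next
      case False
      then show ?thesis using L R \<open>k \<le> m\<close> by (simp add: ff nchain_def)
    qed
  next
    case False
    define a where "a = SX.ff n (k - 1) \<sigma>"
    define b where "b = SX.bf (k - 1) \<sigma>"
    have ff: "SX.ff (Suc n) k \<tau> = act (hh (k - 1) m) (s m a)" unfolding a_def \<tau>_def using T3 assms False by simp
    have bf: "SX.bf k \<tau> = b" unfolding b_def \<tau>_def using T4 assms False by simp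
    have e: "Suc n - k = n - (k - 1)" "Suc (k - 1) = k" "Suc (k - Suc 0) = k" using False assms by auto
    have R: "tensor_map (A_op X s sG act g (k - 1) m) id 0 (k - 1) (P_op X d s n (k - 1) (nchain X s n \<sigma>)) =
       (if degenerate X s (k - 1) a \<or> degenerate X s (n - (k - 1)) b then 0
        else tensor (nchain X s k (SX.ff (Suc n) k \<tau>)) (frag_of b))"
      using nd by (simp add: P_nc TM A_of a_def b_def ff e)
    show ?thesis
    proof (cases "degenerate X s (k - 1) a")
      case True
      have mk: "m \<le> k - 1" using False by simp
      have "degenerate X s (Suc (k - 1)) (act (hh (k - 1) m) (s m a))"
        by (rule L1[OF True mk])
      then have dk: "degenerate X s k (SX.ff (Suc n) k \<tau>)" unfolding ff e(2) .
      have z: "nchain X s k (SX.ff (Suc n) k \<tau>) = 0" using dk by (simp add: nchain_def)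
      have r0: "tensor_map (A_op X s sG act g (k - 1) m) id 0 (k - 1) (P_op X d s n (k - 1) (nchain X s n \<sigma>)) = 0"
        unfolding R using True by simp
      show ?thesis unfolding L z r0 using False by simp
    next
      case nd2: False
      show ?thesis
      proof (cases "degenerate X s (n - (k - 1)) b")
        case True
        have z: "nchain X s (Suc n - k) (SX.bf k \<tau>) = 0" using True unfolding bf e(1) by (simp add: nchain_def)
        have r0: "tensor_map (A_op X s sG act g (k - 1) m) id 0 (k - 1) (P_op X d s n (k - 1) (nchain X s n \<sigma>)) = 0"
          unfolding R using True by simp
        show ?thesis unfolding L z r0 using False by simp
      next
        case False2: False
        have z: "nchain X s (Suc n - k) (SX.bf k \<tau>) = frag_of b" using False2 unfolding bf e(1) by (simp add: nchain_def)
        have r0: "tensor_map (A_op X s sG act g (k - 1) m) id 0 (k - 1) (P_op X d s n (k - 1) (nchain X s n \<sigma>)) =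
            tensor (nchain X s k (SX.ff (Suc n) k \<tau>)) (frag_of b)"
          unfolding R using nd2 False2 by simp
        show ?thesis unfolding L z r0 using False by simp
      qed
    qed
  qed
qed

end

theorem lemma8p1:
  fixes G :: "nat \<Rightarrow> 'g monoid" and dG sG :: "nat \<Rightarrow> 'g \<Rightarrow> 'g"
    and X :: "nat \<Rightarrow> 'x set" and d s :: "nat \<Rightarrow> 'x \<Rightarrow> 'x"
    and act :: "'g \<Rightarrow> 'x \<Rightarrow> 'x" and g :: 'g and \<sigma> :: 'x and n m k :: nat
  assumes "simplicial_action G dG sG X d s act"
    and "is_loop G dG g"
    and "\<sigma> \<in> X n"
    and "m \<le> n" and "k \<le> Suc n"
  shows "P_op X d s (Suc n) k (A_op X s sG act g n m (nchain X s n \<sigma>)) =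
    (if k \<le> m then
       frag_cmul ((-1) ^ k)
         (tensor_map id (A_op X s sG act g (n - k) (m - k)) 1 k (P_op X d s n k (nchain X s n \<sigma>)))
     else
       tensor_map (A_op X s sG act g (k - 1) m) id 0 (k - 1) (P_op X d s n (k - 1) (nchain X s n \<sigma>)))"
proof -
  interpret sact G dG sG X d s act g using assms(1,2) by unfold_locales
  show ?thesis by (rule main[OF assms(3-5)])
qed

end
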